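(* Let $v\ge1$, $n\ge1$, $\epsilon>0$. Let $(Q,\hat P_n)$ and $(Q',\hat P_n')$ be RPBD schemes with parameters $(v,b,r,\lambda,\epsilon)$ and $(v,b',r',\lambda',\epsilon)$, respectively. Then the two schemes are marginally equivalent if and only if there exists a constant $t>0$ such that $(b',r',\lambda')=t(b,r,\lambda)$.
   Context: $\mathcal{X}=\{1,\dots,v\}$, $\Delta_v$ the probability vectors on $\mathcal{X}$. For $\mathcal{I}\subset\mathcal{X}\times\mathcal{Y}$, $\mathcal{I}_x=\{y:(x,y)\in\mathcal{I}\}$. For integers $v>0$, $b>r>\lambda\ge0$, a $(v,b,r,\lambda)$-RPBD is an incidence structure $(\mathcal{X},\mathcal{Y},\mathcal{I})$ with $\mathcal{Y}$ finite nonempty, $|\mathcal{Y}|=b$, $|\mathcal{I}_x|=r$ for all $x$, $|\mathcal{I}_x\cap\mathcal{I}_{x'}|=\lambda$ for all $x\neq x'$. An RPBD scheme with parameters $(v,b,r,\lambda,\epsilon)$ consists of such an RPBD, the mechanism $Q(y|x)=\alpha e^\epsilon$ if $(x,y)\in\mathcal{I}$ and $\alpha$ otherwise, $\alpha=1/(re^\epsilon+b-r)$, and the estimator $\hat P_{n,x}(Y_1,\dots,Y_n)=\frac{1}{(r-\lambda)(e^\epsilon-1)}\left(\frac{N_x}{n\alpha}-(\lambda e^\epsilon+r-\lambda)\right)$, $N_x=\sum_{i=1}^n\mathbb{1}(Y_i\in\mathcal{I}_x)$. Two schemes are marginally equivalent if, with $X_1,\dots,X_n$ i.i.d. $\sim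 P$, $Y_i\sim Q(\cdot|X_i)$, $Y_i'\sim Q'(\cdot|X_i)$, one has $\hat P_{n,x}(Y_1,\dots,Y_n)\overset{d}{=}\hat P'_{n,x}(Y_1',\dots,Y_n')$ for all $x\in\mathcal{X}$ and $P\in\Delta_v$. *)

theory Defs
  imports "HOL-Probability.Probability"
begin

text \<open>Input alphabet X = {1..v} (as naturals). An incidence structure is a pair
  (Ys, I) with I \<subseteq> X \<times> Ys; the section I_x = {y. (x,y) \<in> I}.\<close>

definition Isec :: "(nat \<times> 'y) set \<Rightarrow> nat \<Rightarrow> 'y set" where
  "Isec I x = {y. (x, y) \<in> I}"

definition is_RPBD :: "nat \<Rightarrow> nat \<Rightarrow> nat \<Rightarrow> nat \<Rightarrow> 'y set \<Rightarrow> (nat \<times> 'y) set \<Rightarrow> bool" where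
  "is_RPBD v b r lam Ys I \<longleftrightarrow>
     0 < v \<and> lam < r \<and> r < b \<and>
     finite Ys \<and> Ys \<noteq> {} \<and> card Ys = b \<and>
     I \<subseteq> {1..v} \<times> Ys \<and>
     (\<forall>x\<in>{1..v}. card (Isec I x) = r) \<and>
     (\<forall>x\<in>{1..v}. \<forall>x'\<in>{1..v}. x \<noteq> x' \<longrightarrow> card (Isec I x \<inter> Isec I x') = lam)"

definition rpbd_alpha :: "nat \<Rightarrow> nat \<Rightarrow> real \<Rightarrow> real" where
  "rpbd_alpha b r \<epsilon> = 1 / (real r * exp \<epsilon> + real b - real r)"

definition rpbd_Q :: "nat \<Rightarrow> nat \<Rightarrow> real \<Rightarrow> 'y set \<Rightarrow> (nat \<times> 'y) set \<Rightarrow> nat \<Rightarrow> 'y pmf" where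
  "rpbd_Q b r \<epsilon> Ys I x = embed_pmf (\<lambda>y. if y \<in> Ys then
        (if (x, y) \<in> I then rpbd_alpha b r \<epsilon> * exp \<epsilon> else rpbd_alpha b r \<epsilon>) else 0)"

definition rpbd_est :: "nat \<Rightarrow> nat \<Rightarrow> nat \<Rightarrow> real \<Rightarrow> (nat \<times> 'y) set \<Rightarrow> nat \<Rightarrow> nat \<Rightarrow> 'y list \<Rightarrow> real" where
  "rpbd_est b r lam \<epsilon> I n x ys =
     1 / ((real r - real lam) * (exp \<epsilon> - 1)) *
     (real (length (filter (\<lambda>y. y \<in> Isec I x) ys)) / (real n * rpbd_alpha b r \<epsilon>)
       - (real lam * exp \<epsilon> + real r - real lam))"

definition privatized_sample :: "nat \<Rightarrow> nat pmf \<Rightarrow> (nat \<Rightarrow> 'y pmf) \<Rightarrow> 'y list pmf" where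
  "privatized_sample n P Q =
     map_pmf (map snd) (replicate_pmf n (do {x \<leftarrow> P; y \<leftarrow> Q x; return_pmf (x, y)}))"

definition marginally_equivalent ::
  "nat \<Rightarrow> nat \<Rightarrow> (nat \<Rightarrow> 'y pmf) \<Rightarrow> (nat \<Rightarrow> 'y list \<Rightarrow> real)
       \<Rightarrow> (nat \<Rightarrow> 'z pmf) \<Rightarrow> (nat \<Rightarrow> 'z list \<Rightarrow> real) \<Rightarrow> bool" where
  "marginally_equivalent v n Q est Q' est' \<longleftrightarrow>
     (\<forall>x\<in>{1..v}. \<forall>P :: nat pmf. set_pmf P \<subseteq> {1..v} \<longrightarrow>
        map_pmf (est x) (privatized_sample n P Q) = map_pmf (est' x) (privatized_sample n P Q'))"

end

theory Submission
  imports Defs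
begin

lemma rep_map: "map_pmf (map f) (replicate_pmf n M) = replicate_pmf n (map_pmf f M)"
proof (induction n)
  case (Suc n)
  show ?case
    by (simp add: map_bind_pmf bind_map_pmf Suc.IH[symmetric])
qed simp

lemma map_bern: "map_pmf (\<lambda>y. y \<in> S) M = bernoulli_pmf (measure_pmf.prob M S)"
proof (rule pmf_eqI)
  fix i :: bool
  have c: "measure_pmf.prob M (- S) = 1 - measure_pmf.prob M S"
    using measure_pmf.prob_compl[of S M] by (simp add: Compl_eq_Diff_UNIV)
  have c2: "{x. x \<notin> S} = - S" by auto
  show "pmf (map_pmf (\<lambda>y. y \<in> S) M) i = pmf (bernoulli_pmf (measure_pmf.prob M S)) i"
    by (cases i) (auto simp: pmf_map vimage_def c c2)
qed

lemma priv: "privatized_sample n P Q = replicate_pmf n (bind_pmf P Q)"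
proof -
  have "map_pmf snd (do {x \<leftarrow> P; y \<leftarrow> Q x; return_pmf (x, y)}) = bind_pmf P Q"
    by (simp add: map_bind_pmf bind_return_pmf' map_pmf_def[symmetric] map_pmf_comp)
  then show ?thesis unfolding privatized_sample_def rep_map by simp
qed

lemma est_law:
  "map_pmf (rpbd_est b r lam \<epsilon> I n x) (privatized_sample n P Q)
   = map_pmf (\<lambda>k. 1 / ((real r - real lam) * (exp \<epsilon> - 1)) *
     (real k / (real n * rpbd_alpha b r \<epsilon>) - (real lam * exp \<epsilon> + real r - real lam)))
     (binomial_pmf n (measure_pmf.prob (bind_pmf P Q) (Isec I x)))"
proof -
  let ?M = "bind_pmf P Q" and ?S = "Isec I x"
  have "binomial_pmf n (measure_pmf.prob ?M ?S) = map_pmf (length \<circ> filter id) (replicate_pmf n (map_pmf (\<lambda>y. y \<in> ?S) ?M))"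
    by (subst binomial_pmf_altdef) (auto simp: map_bern measure_pmf.prob_le_1)
  also have "\<dots> = map_pmf (\<lambda>ys. length (filter (\<lambda>y. y \<in> ?S) ys)) (replicate_pmf n ?M)"
    by (simp add: rep_map[symmetric] map_pmf_comp filter_map o_def)
  finally show ?thesis
    by (simp add: priv map_pmf_comp rpbd_est_def[abs_def])
qed

lemma alpha_pos:
  assumes "is_RPBD v b r lam Ys I" "0 < \<epsilon>"
  shows "0 < rpbd_alpha b r \<epsilon>" "rpbd_alpha b r \<epsilon> * (real r * exp \<epsilon> + real b - real r) = 1"
proof -
  have "r < b" using assms(1) unfolding is_RPBD_def by auto
  moreover have "0 \<le> real r * exp \<epsilon>" by simp
  ultimately have "0 < real r * exp \<epsilon> + real b - real r" by linarith
  then show "0 < rpbd_alpha b r \<epsilon>" "rpbd_alpha b r \<epsilon> * (real r * exp \<epsilon> + real b - real r) = 1"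
    by (auto simp: rpbd_alpha_def)
qed

lemma Isec_sub:
  assumes "is_RPBD v b r lam Ys I"
  shows "Isec I x \<subseteq> Ys" "finite (Isec I x)"
proof -
  show "Isec I x \<subseteq> Ys" using assms unfolding is_RPBD_def Isec_def by auto
  then show "finite (Isec I x)" using assms unfolding is_RPBD_def using finite_subset by auto
qed

lemma pmfQ:
  assumes "is_RPBD v b r lam Ys I" "0 < \<epsilon>" "x' \<in> {1..v}"
  shows "pmf (rpbd_Q b r \<epsilon> Ys I x') y = (if y \<in> Ys then
        (if y \<in> Isec I x' then rpbd_alpha b r \<epsilon> * exp \<epsilon> else rpbd_alpha b r \<epsilon>) else 0)"
proof -
  let ?a = "rpbd_alpha b r \<epsilon>"
  define f where "f = (\<lambda>y. if y \<in> Ys then (if (x', y) \<in> I then ?a * exp \<epsilon> else ?a) else 0)"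
  have fin: "finite Ys" "card Ys = b" "card (Isec I x') = r" "r < b" using assms unfolding is_RPBD_def by auto
  have sub: "Isec I x' \<subseteq> Ys" by (rule Isec_sub[OF assms(1)])
  have apos: "0 < ?a" using alpha_pos[OF assms(1,2)] by simp
  have nn: "\<And>y. 0 \<le> f y" using apos by (auto simp: f_def)
  have "(\<Sum>y\<in>Ys. f y) = (\<Sum>y\<in>Ys. if y \<in> Isec I x' then ?a * exp \<epsilon> else ?a)"
    by (rule sum.cong) (auto simp: f_def Isec_def)
  also have "\<dots> = (\<Sum>y\<in>Isec I x'. ?a * exp \<epsilon>) + (\<Sum>y\<in>Ys - Isec I x'. ?a)"
    using sum.If_cases[OF fin(1), of "\<lambda>y. y \<in> Isec I x'" "\<lambda>_. ?a * exp \<epsilon>" "\<lambda>_. ?a"] sub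
    by (simp add: Int_absorb1 Diff_eq[symmetric] Int_commute)
  also have "\<dots> = ?a * (real r * exp \<epsilon> + real b - real r)"
    using fin sub by (simp add: card_Diff_subset finite_subset of_nat_diff card_mono algebra_simps)
  also have "\<dots> = 1" using alpha_pos[OF assms(1,2)] by simp
  finally have s1: "(\<Sum>y\<in>Ys. f y) = 1" .
  have "(\<integral>\<^sup>+ y. ennreal (f y) \<partial>count_space UNIV) = (\<Sum>y\<in>Ys. ennreal (f y))"
    by (rule nn_integral_count_space') (auto simp: fin f_def)
  also have "\<dots> = 1" using s1 nn by (simp add: sum_ennreal[symmetric])
  finally have "(\<integral>\<^sup>+ y. ennreal (f y) \<partial>count_space UNIV) = 1" .
  then have "pmf (embed_pmf f) y = f y" using nn by (intro pmf_embed_pmf) auto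
  then show ?thesis unfolding rpbd_Q_def f_def by (simp add: Isec_def)
qed

lemma Qprob:
  assumes "is_RPBD v b r lam Ys I" "0 < \<epsilon>" "x \<in> {1..v}" "x' \<in> {1..v}"
  shows "measure_pmf.prob (rpbd_Q b r \<epsilon> Ys I x') (Isec I x)
     = rpbd_alpha b r \<epsilon> * (real r + (exp \<epsilon> - 1) * real (if x = x' then r else lam))"
proof -
  let ?a = "rpbd_alpha b r \<epsilon>"
  let ?A = "Isec I x" and ?B = "Isec I x'"
  have fA: "finite ?A" "?A \<subseteq> Ys" using Isec_sub[OF assms(1)] by auto
  have fB: "finite ?B" using Isec_sub[OF assms(1)] by auto
  have cA: "card ?A = r" using assms unfolding is_RPBD_def by auto
  have cAB: "card (?A \<inter> ?B) = (if x = x' then r else lam)"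
    using assms unfolding is_RPBD_def by auto
  have le: "card (?A \<inter> ?B) \<le> r" using cA fA by (metis card_mono inf_le1)
  have "measure_pmf.prob (rpbd_Q b r \<epsilon> Ys I x') ?A = (\<Sum>y\<in>?A. pmf (rpbd_Q b r \<epsilon> Ys I x') y)"
    by (rule measure_measure_pmf_finite[OF fA(1)])
  also have "\<dots> = (\<Sum>y\<in>?A. if y \<in> ?B then ?a * exp \<epsilon> else ?a)"
    using fA by (intro sum.cong) (auto simp: pmfQ[OF assms(1,2,4)])
  also have "\<dots> = (\<Sum>y\<in>?A \<inter> ?B. ?a * exp \<epsilon>) + (\<Sum>y\<in>?A - ?B. ?a)"
    using sum.If_cases[OF fA(1), of "\<lambda>y. y \<in> ?B" "\<lambda>_. ?a * exp \<epsilon>" "\<lambda>_. ?a"]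
    by (simp add: Diff_eq[symmetric] Int_def set_diff_eq)
  also have "\<dots> = ?a * exp \<epsilon> * card (?A \<inter> ?B) + ?a * (real r - card (?A \<inter> ?B))"
    using fA cA le by (simp add: card_Diff_subset_Int of_nat_diff)
  also have "\<dots> = ?a * (real r + (exp \<epsilon> - 1) * real (card (?A \<inter> ?B)))"
    by (simp add: algebra_simps)
  finally show ?thesis using cAB by simp
qed

lemma bindprob:
  fixes P :: "nat pmf"
  assumes "set_pmf P \<subseteq> {1..v}" "\<And>a. a \<in> {1..v} \<Longrightarrow> finite (set_pmf (Q a))"
  shows "measure_pmf.prob (bind_pmf P Q) S = (\<Sum>a\<in>{1..v}. pmf P a * measure_pmf.prob (Q a) S)"
proof -
  have "measure_pmf.prob (bind_pmf P Q) S = measure_pmf.expectation (bind_pmf P Q) (indicator S)"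
    by simp
  also have "\<dots> = (\<Sum>a\<in>{1..v}. pmf P a *\<^sub>R measure_pmf.expectation (Q a) (indicator S))"
    by (rule pmf_expectation_bind) (use assms in auto)
  also have "\<dots> = (\<Sum>a\<in>{1..v}. pmf P a * measure_pmf.prob (Q a) S)"
    by simp
  finally show ?thesis .
qed

lemma finQ:
  assumes "is_RPBD v b r lam Ys I" "0 < \<epsilon>" "a \<in> {1..v}"
  shows "finite (set_pmf (rpbd_Q b r \<epsilon> Ys I a))"
proof -
  have "set_pmf (rpbd_Q b r \<epsilon> Ys I a) \<subseteq> Ys"
    using pmfQ[OF assms] by (auto simp: set_pmf_eq)
  moreover have "finite Ys" using assms unfolding is_RPBD_def by auto
  ultimately show ?thesis by (rule finite_subset)
qed

lemma aff:
  fixes A D A' D' p p' :: real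
  assumes "0<A" "0<A'" "0<p" "p<1" "0<p'" "p'<1" "1 \<le> n"
    and eq: "map_pmf (\<lambda>k. A*real k + D) (binomial_pmf n p) = map_pmf (\<lambda>k. A'*real k + D') (binomial_pmf n p')"
  shows "A = A' \<and> D = D' \<and> p = p'"
proof -
  have S: "(\<lambda>k. A*real k + D) ` {..n} = (\<lambda>k. A'*real k + D') ` {..n}"
  proof -
    have b1: "set_pmf (binomial_pmf n p) = {..n}" "set_pmf (binomial_pmf n p') = {..n}"
      using assms by auto
    show ?thesis using arg_cong[OF eq, of set_pmf] unfolding set_map_pmf b1 .
  qed
  have "D \<in> (\<lambda>k. A'*real k + D') ` {..n}" using S[symmetric] by force
  then have d1: "D' \<le> D" using assms by auto
  have "D' \<in> (\<lambda>k. A*real k + D) ` {..n}" using S by force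
  then have d2: "D \<le> D'" using assms by auto
  have "A * real n + D \<in> (\<lambda>k. A'*real k + D') ` {..n}" using S[symmetric] by force
  then obtain k where "k \<le> n" "A * real n + D = A' * real k + D'" by auto
  moreover have "A' * real k \<le> A' * real n" using \<open>k \<le> n\<close> assms by simp
  ultimately have a1: "A * real n \<le> A' * real n" using d1 d2 by linarith
  have "A' * real n + D' \<in> (\<lambda>k. A*real k + D) ` {..n}" using S by force
  then obtain k' where "k' \<le> n" "A' * real n + D' = A * real k' + D" by auto
  moreover have "A * real k' \<le> A * real n" using \<open>k' \<le> n\<close> assms by simp
  ultimately have a2: "A' * real n \<le> A * real n" using d1 d2 by linarith
  have AA: "A = A'" using a1 a2 assms by auto
  have DD: "D = D'" using d1 d2 by simp
  have inj1: "inj (\<lambda>k. A*real k + D)" using assms by (auto simp: inj_on_def)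
  have "pmf (binomial_pmf n p) 0 = pmf (binomial_pmf n p') 0"
    using arg_cong[OF eq, of "\<lambda>M. pmf M D"] pmf_map_inj'[OF inj1, of "binomial_pmf n p" 0]
      pmf_map_inj'[OF inj1, of "binomial_pmf n p'" 0] AA DD by simp
  then have "(1 - p) ^ n = (1 - p') ^ n" using assms by simp
  then have "1 - p = 1 - p'" using assms by (subst (asm) power_eq_iff_eq_base) auto
  then show ?thesis using AA DD by simp
qed

lemma aff_helper:
  fixes d m c :: real
  assumes "d \<noteq> 0" "m \<noteq> 0"
  shows "1 / d * (k / m - c) = (1 / (d * m)) * k + (- c / d)"
  using assms by (simp add: field_simps)

lemma scale_helper:
  fixes t r l e k n a E :: real
  assumes "t \<noteq> 0"
  shows "1 / ((t*r - t*l) * e) * (k / (n * (a / t)) - (t*l*E + t*r - t*l))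
       = 1 / ((r - l) * e) * (k / (n * a) - (l*E + r - l))"
proof -
  have 1: "t*r - t*l = t*(r-l)" by (simp add: algebra_simps)
  have 2: "k / (n * (a / t)) = t * (k / (n * a))" using assms by (simp add: field_simps)
  have 3: "t*l*E + t*r - t*l = t*(l*E + r - l)" by (simp add: algebra_simps)
  have 4: "1 / (t * X * e) * (t * Y) = 1 / (X * e) * Y" for X Y :: real
    using assms by (simp add: field_simps)
  show ?thesis unfolding 1 2 3 right_diff_distrib[symmetric] 4 ..
qed

lemma gform:
  assumes "is_RPBD v b r lam Ys I" "0 < \<epsilon>" "1 \<le> n"
  shows "(\<lambda>k::nat. 1 / ((real r - real lam) * (exp \<epsilon> - 1)) *
     (real k / (real n * rpbd_alpha b r \<epsilon>) - (real lam * exp \<epsilon> + real r - real lam)))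
   = (\<lambda>k. (1 / ((real r - real lam) * (exp \<epsilon> - 1) * (real n * rpbd_alpha b r \<epsilon>))) * real k
       + (- (real lam * exp \<epsilon> + real r - real lam) / ((real r - real lam) * (exp \<epsilon> - 1))))"
proof -
  have "lam < r" using assms unfolding is_RPBD_def by auto
  then have h1: "real r - real lam \<noteq> 0" by simp
  have h2: "exp \<epsilon> - 1 \<noteq> 0" using assms(2) by simp
  have h3: "real n * rpbd_alpha b r \<epsilon> \<noteq> 0" using alpha_pos[OF assms(1,2)] assms(3) by simp
  have h12: "(real r - real lam) * (exp \<epsilon> - 1) \<noteq> 0" using h1 h2 by simp
  show ?thesis by (intro ext) (rule aff_helper[OF h12 h3])
qed

theorem theorem7:
  fixes v n b r lam b' r' lam' :: nat and \<epsilon> :: real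
    and Ys :: "'y set" and I :: "(nat \<times> 'y) set"
    and Ys' :: "'z set" and I' :: "(nat \<times> 'z) set"
  assumes "1 \<le> v" and "1 \<le> n" and "0 < \<epsilon>"
    and "is_RPBD v b r lam Ys I"
    and "is_RPBD v b' r' lam' Ys' I'"
  shows "marginally_equivalent v n
           (rpbd_Q b r \<epsilon> Ys I) (rpbd_est b r lam \<epsilon> I n)
           (rpbd_Q b' r' \<epsilon> Ys' I') (rpbd_est b' r' lam' \<epsilon> I' n)
         \<longleftrightarrow> (\<exists>t::real. 0 < t \<and> real b' = t * real b \<and> real r' = t * real r
                          \<and> real lam' = t * real lam)"
proof -
  define E where "E = exp \<epsilon>"
  define a where "a = rpbd_alpha b r \<epsilon>"
  define a' where "a' = rpbd_alpha b' r' \<epsilon>"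
  have E1: "1 < E" using assms(3) by (simp add: E_def)
  have apos: "0 < a" "a * (real r * E + real b - real r) = 1"
    using alpha_pos[OF assms(4,3)] by (auto simp: a_def E_def)
  have apos': "0 < a'" "a' * (real r' * E + real b' - real r') = 1"
    using alpha_pos[OF assms(5,3)] by (auto simp: a'_def E_def)
  have R: "lam < r" "r < b" using assms(4) unfolding is_RPBD_def by auto
  have R': "lam' < r'" "r' < b'" using assms(5) unfolding is_RPBD_def by auto
  have one: "(1::nat) \<in> {1..v}" using assms(1) by simp
  show ?thesis
  proof
    assume ME: "marginally_equivalent v n
           (rpbd_Q b r \<epsilon> Ys I) (rpbd_est b r lam \<epsilon> I n)
           (rpbd_Q b' r' \<epsilon> Ys' I') (rpbd_est b' r' lam' \<epsilon> I' n)"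
    have "map_pmf (rpbd_est b r lam \<epsilon> I n 1) (privatized_sample n (return_pmf 1) (rpbd_Q b r \<epsilon> Ys I))
        = map_pmf (rpbd_est b' r' lam' \<epsilon> I' n 1) (privatized_sample n (return_pmf 1) (rpbd_Q b' r' \<epsilon> Ys' I'))"
      using ME one unfolding marginally_equivalent_def by auto
    moreover have "measure_pmf.prob (bind_pmf (return_pmf 1) (rpbd_Q b r \<epsilon> Ys I)) (Isec I 1) = a * real r * E"
      using Qprob[OF assms(4,3) one one] by (simp add: bind_return_pmf a_def E_def algebra_simps)
    moreover have "measure_pmf.prob (bind_pmf (return_pmf 1) (rpbd_Q b' r' \<epsilon> Ys' I')) (Isec I' 1) = a' * real r' * E"
      using Qprob[OF assms(5,3) one one] by (simp add: bind_return_pmf a'_def E_def algebra_simps)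
    ultimately have eq: "map_pmf (\<lambda>k. (1 / ((real r - real lam) * (E - 1) * (real n * a))) * real k
       + (- (real lam * E + real r - real lam) / ((real r - real lam) * (E - 1)))) (binomial_pmf n (a * real r * E))
      = map_pmf (\<lambda>k. (1 / ((real r' - real lam') * (E - 1) * (real n * a'))) * real k
       + (- (real lam' * E + real r' - real lam') / ((real r' - real lam') * (E - 1)))) (binomial_pmf n (a' * real r' * E))"
      unfolding est_law gform[OF assms(4,3,2)] gform[OF assms(5,3,2)] by (simp add: a_def a'_def E_def)
    have p1: "0 < a * real r * E" "a * real r * E < 1"
    proof -
      show "0 < a * real r * E" using apos E1 R by simp
      have "a * (real r * E) < a * (real r * E + real b - real r)"
        by (rule mult_strict_left_mono) (use R apos in auto)
      then show "a * real r * E < 1" using apos(2) by (simp add: mult.assoc)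
    qed
    have p2: "0 < a' * real r' * E" "a' * real r' * E < 1"
    proof -
      show "0 < a' * real r' * E" using apos' E1 R' by simp
      have "a' * (real r' * E) < a' * (real r' * E + real b' - real r')"
        by (rule mult_strict_left_mono) (use R' apos' in auto)
      then show "a' * real r' * E < 1" using apos'(2) by (simp add: mult.assoc)
    qed
    have Apos: "0 < 1 / ((real r - real lam) * (E - 1) * (real n * a))"
      using R E1 apos assms(2) by simp
    have Apos': "0 < 1 / ((real r' - real lam') * (E - 1) * (real n * a'))"
      using R' E1 apos' assms(2) by simp
    from aff[OF Apos Apos' p1 p2 assms(2) eq]
    have AA: "(real r - real lam) * (E - 1) * (real n * a) = (real r' - real lam') * (E - 1) * (real n * a')"
      and pp: "a * real r * E = a' * real r' * E" by auto
    have "((real r - real lam) * a) * ((E - 1) * real n) = ((real r' - real lam') * a') * ((E - 1) * real n)"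
      using AA by (simp add: ac_simps)
    moreover have "(E - 1) * real n \<noteq> 0" using E1 assms(2) by simp
    ultimately have "(real r - real lam) * a = (real r' - real lam') * a'" by simp
    then have k1: "a * (real r - real lam) = a' * (real r' - real lam')"
      by (simp add: ac_simps)
    have k2: "a * real r = a' * real r'" using pp E1 by simp
    have k3: "a * real lam = a' * real lam'" using k1 k2 by (simp add: algebra_simps)
    have k4: "a * real b = a' * real b'"
    proof -
      have "a * real b = 1 - a * real r * (E - 1)" using apos(2) by (simp add: algebra_simps)
      also have "\<dots> = 1 - a' * real r' * (E - 1)" using k2 by simp
      also have "\<dots> = a' * real b'" using apos'(2) by (simp add: algebra_simps)
      finally show ?thesis .
    qed
    show "\<exists>t::real. 0 < t \<and> real b' = t * real b \<and> real r' = t * real r \<and> real lam' = t * real lam"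
    proof (intro exI[of _ "a / a'"] conjI)
      show "0 < a / a'" using apos apos' by simp
      show "real b' = a / a' * real b" using k4 apos' by (simp add: field_simps)
      show "real r' = a / a' * real r" using k2 apos' by (simp add: field_simps)
      show "real lam' = a / a' * real lam" using k3 apos' by (simp add: field_simps)
    qed
  next
    assume "\<exists>t::real. 0 < t \<and> real b' = t * real b \<and> real r' = t * real r \<and> real lam' = t * real lam"
    then obtain t where t: "0 < t" "real b' = t * real b" "real r' = t * real r" "real lam' = t * real lam"
      by blast
    have aa: "a' = a / t"
    proof -
      have "a' * (t * (real r * E + real b - real r)) = 1" using apos'(2) t by (simp add: algebra_simps)
      then have "(a' * t) * (real r * E + real b - real r) = a * (real r * E + real b - real r)"
        using apos(2) by (simp add: ac_simps)
      moreover have "real r * E + real b - real r \<noteq> 0" using apos(2) by auto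
      ultimately have "a' * t = a" by simp
      then show ?thesis using t by (simp add: field_simps)
    qed
    have k2: "a' * real r' = a * real r" and k3: "a' * real lam' = a * real lam"
      using aa t by auto
    have gg: "(\<lambda>k::nat. 1 / ((real r' - real lam') * (E - 1)) *
       (real k / (real n * a') - (real lam' * E + real r' - real lam')))
      = (\<lambda>k::nat. 1 / ((real r - real lam) * (E - 1)) *
       (real k / (real n * a) - (real lam * E + real r - real lam)))"
    proof (intro ext)
      fix k :: nat
      have h1: "real r - real lam \<noteq> 0" using R by simp
      have h2: "E - 1 \<noteq> 0" using E1 by simp
      have h3: "real n \<noteq> 0" using assms(2) by simp
      show "1 / ((real r' - real lam') * (E - 1)) *
       (real k / (real n * a') - (real lam' * E + real r' - real lam'))
        = 1 / ((real r - real lam) * (E - 1)) *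
       (real k / (real n * a) - (real lam * E + real r - real lam))"
        unfolding aa t(2-4) using scale_helper[of t] t(1) by simp
    qed
    show "marginally_equivalent v n
           (rpbd_Q b r \<epsilon> Ys I) (rpbd_est b r lam \<epsilon> I n)
           (rpbd_Q b' r' \<epsilon> Ys' I') (rpbd_est b' r' lam' \<epsilon> I' n)"
      unfolding marginally_equivalent_def
    proof (intro ballI allI impI)
      fix x P assume x: "x \<in> {1..v}" and P: "set_pmf (P :: nat pmf) \<subseteq> {1..v}"
      have "measure_pmf.prob (bind_pmf P (rpbd_Q b r \<epsilon> Ys I)) (Isec I x)
          = (\<Sum>c\<in>{1..v}. pmf P c * (a * (real r + (E - 1) * real (if x = c then r else lam))))"
        using bindprob[OF P finQ[OF assms(4,3)]] Qprob[OF assms(4,3) x]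
        by (simp add: a_def E_def)
      also have "\<dots> = (\<Sum>c\<in>{1..v}. pmf P c * (a' * (real r' + (E - 1) * real (if x = c then r' else lam'))))"
      proof (intro sum.cong refl)
        fix c
        have e1: "a' * (real r' + (E - 1) * real r') = (a' * real r') * E"
          "a * (real r + (E - 1) * real r) = (a * real r) * E"
          "a' * (real r' + (E - 1) * real lam') = a' * real r' + (E - 1) * (a' * real lam')"
          "a * (real r + (E - 1) * real lam) = a * real r + (E - 1) * (a * real lam)"
          by (simp_all add: algebra_simps)
        show "pmf P c * (a * (real r + (E - 1) * real (if x = c then r else lam))) =
              pmf P c * (a' * (real r' + (E - 1) * real (if x = c then r' else lam')))"
          by (cases "x = c") (simp_all only: simp_thms if_True if_False e1 k2 k3)
      qed
      also have "\<dots> = measure_pmf.prob (bind_pmf P (rpbd_Q b' r' \<epsilon> Ys' I')) (Isec I' x)"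
        using bindprob[OF P finQ[OF assms(5,3)]] Qprob[OF assms(5,3) x]
        by (simp add: a'_def E_def)
      finally have pe: "measure_pmf.prob (bind_pmf P (rpbd_Q b r \<epsilon> Ys I)) (Isec I x)
          = measure_pmf.prob (bind_pmf P (rpbd_Q b' r' \<epsilon> Ys' I')) (Isec I' x)" .
      show "map_pmf (rpbd_est b r lam \<epsilon> I n x) (privatized_sample n P (rpbd_Q b r \<epsilon> Ys I)) =
            map_pmf (rpbd_est b' r' lam' \<epsilon> I' n x) (privatized_sample n P (rpbd_Q b' r' \<epsilon> Ys' I'))"
        unfolding est_law pe using gg by (simp add: a_def a'_def E_def)
    qed
  qed
qed

end
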